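(* Let $N$ be a positive integer, $C=N+1$, and $0<\eta\le\frac{1}{270C}$. Let $b_1,b_2\in\mathbb{R}^A$ and $a_0\in\Delta_A$ with all coordinates positive, and define $$a_1=\arg\min_{a\in\Delta_A}F_1(a),\ F_1(a)=\langle a,b_1\rangle+D_\psi(a,a_0);\qquad a_2=\arg\min_{a\in\Delta_A}F_2(a),\ F_2(a)=\langle a,b_2\rangle+D_\psi(a,a_0).$$ If $\|b_1-b_2\|_{\nabla^{-2}\psi(a_1)}\le 12\sqrt\eta\,C$, then for all $i\in\{1,\dots,A\}$, $|a_{2,i}-a_{1,i}|\le 60\,\eta\,C\,a_{1,i}$.
   Context: $\Delta_A$ is the probability simplex in $\mathbb{R}^A$. $\psi(x)=\frac1\eta\sum_{i=1}^A\log\frac{1}{x_i}$ for $x$ with positive coordinates, $D_\psi(x,x')=\psi(x)-\psi(x')-\langle\nabla\psi(x'),x-x'\rangle$. $\nabla^2\psi(x)$ is the diagonal matrix with entries $\frac{1}{\eta x_i^2}$ and $\nabla^{-2}\psi(x)$ its inverse (diagonal entries $\eta x_i^2$). For a positive semidefinite matrix $M$, $\|v\|_M=\sqrt{v^\top Mv}$. *)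

theory Defs
  imports Complex_Main
begin

text \<open>Coordinates are indexed by a finite type 'i (so A = CARD('i)).
  Vectors in R^A are functions 'i => real.\<close>

definition simplex :: "('i::finite \<Rightarrow> real) set" where
  "simplex = {x. (\<forall>i. 0 \<le> x i) \<and> (\<Sum>i\<in>UNIV. x i) = 1}"

definition psi :: "real \<Rightarrow> ('i::finite \<Rightarrow> real) \<Rightarrow> real" where
  "psi \<eta> x = (1 / \<eta>) * (\<Sum>i\<in>UNIV. ln (1 / x i))"

definition grad_psi :: "real \<Rightarrow> ('i::finite \<Rightarrow> real) \<Rightarrow> 'i \<Rightarrow> real" where
  "grad_psi \<eta> x i = - 1 / (\<eta> * x i)"

definition inner_vec :: "('i::finite \<Rightarrow> real) \<Rightarrow> ('i \<Rightarrow> real) \<Rightarrow> real" where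
  "inner_vec u v = (\<Sum>i\<in>UNIV. u i * v i)"

definition bregman :: "real \<Rightarrow> ('i::finite \<Rightarrow> real) \<Rightarrow> ('i \<Rightarrow> real) \<Rightarrow> real" where
  "bregman \<eta> x x' = psi \<eta> x - psi \<eta> x' - inner_vec (grad_psi \<eta> x') (\<lambda>i. x i - x' i)"

definition inv_hess_psi :: "real \<Rightarrow> ('i::finite \<Rightarrow> real) \<Rightarrow> 'i \<Rightarrow> 'i \<Rightarrow> real" where
  "inv_hess_psi \<eta> x i j = (if i = j then \<eta> * (x i)\<^sup>2 else 0)"

definition mat_norm :: "('i::finite \<Rightarrow> 'i \<Rightarrow> real) \<Rightarrow> ('i \<Rightarrow> real) \<Rightarrow> real" where
  "mat_norm M v = sqrt (\<Sum>i\<in>UNIV. \<Sum>j\<in>UNIV. v i * M i j * v j)"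

definition obj :: "real \<Rightarrow> ('i::finite \<Rightarrow> real) \<Rightarrow> ('i \<Rightarrow> real) \<Rightarrow> ('i \<Rightarrow> real) \<Rightarrow> real" where
  "obj \<eta> b a0 a = inner_vec a b + bregman \<eta> a a0"

text \<open>Since D_psi(a,a0) = +infinity when some
  coordinate of a is 0, the minimization effectively ranges over the points of the
  simplex with positive coordinates, and the minimizer itself has positive coordinates.\<close>
definition is_argmin_simplex :: "real \<Rightarrow> ('i::finite \<Rightarrow> real) \<Rightarrow> ('i \<Rightarrow> real) \<Rightarrow> ('i \<Rightarrow> real) \<Rightarrow> bool" where
  "is_argmin_simplex \<eta> b a0 a \<longleftrightarrow>
     a \<in> simplex \<and> (\<forall>i. 0 < a i) \<and>
     (\<forall>a'\<in>simplex. (\<forall>i. 0 < a' i) \<longrightarrow> obj \<eta> b a0 a \<le> obj \<eta> b a0 a')"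

end

theory Submission
  imports Defs
begin

definition gfun :: "real \<Rightarrow> ('i::finite \<Rightarrow> real) \<Rightarrow> ('i \<Rightarrow> real) \<Rightarrow> ('i \<Rightarrow> real) \<Rightarrow> 'i \<Rightarrow> real" where
  "gfun \<eta> b a0 a k = b k - 1 / (\<eta> * a k) + 1 / (\<eta> * a0 k)"

lemma obj_eq:
  assumes "\<forall>k. 0 < a k" "\<forall>k. 0 < a0 k"
  shows "obj \<eta> b a0 a = (\<Sum>k\<in>UNIV. a k * b k - ln (a k) / \<eta> + ln (a0 k) / \<eta> + (a k - a0 k) / (\<eta> * a0 k))"
proof -
  have l: "ln (1 / x) = - ln x" if "x > 0" for x :: real using that by (simp add: ln_div)
  show ?thesis
    unfolding obj_def bregman_def psi_def inner_vec_def grad_psi_def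
    using assms
    by (simp add: l sum.distrib sum_subtractf sum_divide_distrib sum_negf sum_distrib_left diff_divide_distrib algebra_simps)
qed

lemma stationary:
  fixes a b a0 :: "'i::finite \<Rightarrow> real"
  assumes am: "is_argmin_simplex \<eta> b a0 a" and a0p: "\<forall>k. 0 < a0 k" and eta: "\<eta> > 0"
  shows "gfun \<eta> b a0 a i = gfun \<eta> b a0 a j"
proof (cases "i = j")
  case True then show ?thesis by simp
next
  case False
  have ap: "\<forall>k. 0 < a k" and as: "a \<in> simplex"
    and mn: "\<And>a'. a' \<in> simplex \<Longrightarrow> (\<forall>k. 0 < a' k) \<Longrightarrow> obj \<eta> b a0 a \<le> obj \<eta> b a0 a'"
    using am unfolding is_argmin_simplex_def by auto
  define d :: "'i \<Rightarrow> real" where "d k = (if k = i then 1 else 0) - (if k = j then 1 else 0)" for k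
  define pt where "pt t k = a k + t * d k" for t k
  define h where "h t = obj \<eta> b a0 (pt t)" for t
  define \<delta> where "\<delta> = min (a i) (a j)"
  have \<delta>p: "\<delta> > 0" using ap by (simp add: \<delta>_def)
  have dsum: "(\<Sum>k\<in>UNIV. d k) = 0"
    unfolding d_def by (simp add: sum_subtractf)
  have ptpos: "\<forall>k. 0 < pt t k" if "\<bar>t\<bar> < \<delta>" for t
  proof
    fix k
    show "0 < pt t k" using that ap False unfolding pt_def d_def \<delta>_def
      by (cases "k = i"; cases "k = j"; auto simp: abs_less_iff)
  qed
  have ptsimp: "pt t \<in> simplex" if "\<bar>t\<bar> < \<delta>" for t
  proof -
    have "(\<Sum>k\<in>UNIV. pt t k) = (\<Sum>k\<in>UNIV. a k) + t * (\<Sum>k\<in>UNIV. d k)"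
      unfolding pt_def by (simp add: sum.distrib sum_distrib_left)
    also have "\<dots> = 1" using as dsum by (simp add: simplex_def)
    finally show ?thesis using ptpos[OF that] unfolding simplex_def by (auto intro: less_imp_le)
  qed
  have pt0: "pt 0 = a" by (simp add: pt_def fun_eq_iff)
  have hmin: "\<forall>y. \<bar>0 - y\<bar> < \<delta> \<longrightarrow> h 0 \<le> h y"
    unfolding h_def pt0 using mn ptsimp ptpos by auto
  have heq: "h t = (\<Sum>k\<in>UNIV. pt t k * b k - ln (pt t k) / \<eta> + ln (a0 k) / \<eta> + (pt t k - a0 k) / (\<eta> * a0 k))"
    if "\<bar>t\<bar> < \<delta>" for t
    unfolding h_def using obj_eq[OF ptpos[OF that] a0p] .
  define H where "H t = (\<Sum>k\<in>UNIV. pt t k * b k - ln (pt t k) / \<eta> + ln (a0 k) / \<eta> + (pt t k - a0 k) / (\<eta> * a0 k))" for t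
  have "(H has_field_derivative (\<Sum>k\<in>UNIV. d k * gfun \<eta> b a0 a k)) (at 0)"
    unfolding H_def pt_def
  proof (rule DERIV_sum)
    fix k :: 'i
    have ak: "a k > 0" "a0 k > 0" using ap a0p by auto
    have d1: "((\<lambda>t. a k + t * d k) has_real_derivative d k) (at 0)"
      by (auto intro!: derivative_eq_intros)
    have d2: "((\<lambda>t. ln (a k + t * d k)) has_real_derivative d k / a k) (at 0)"
      using ak by (auto intro!: derivative_eq_intros simp: field_simps)
    have d3: "((\<lambda>t. (a k + t * d k) * b k - ln (a k + t * d k) / \<eta> + ln (a0 k) / \<eta> + (a k + t * d k - a0 k) / (\<eta> * a0 k))
       has_real_derivative (d k * b k - (d k / a k) / \<eta> + 0 + d k / (\<eta> * a0 k))) (at 0)"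
      using ak eta by (auto intro!: derivative_eq_intros simp: field_simps)
    show "((\<lambda>t. (a k + t * d k) * b k - ln (a k + t * d k) / \<eta> + ln (a0 k) / \<eta> + (a k + t * d k - a0 k) / (\<eta> * a0 k))
       has_real_derivative d k * gfun \<eta> b a0 a k) (at 0)"
      using d3 ak eta by (simp add: gfun_def field_simps)
  qed
  moreover have "\<forall>y. \<bar>0 - y\<bar> < \<delta> \<longrightarrow> H 0 \<le> H y"
  proof (intro allI impI)
    fix y :: real assume y: "\<bar>0 - y\<bar> < \<delta>"
    then have y': "\<bar>y\<bar> < \<delta>" by simp
    have "H 0 = h 0" using heq[of 0] \<delta>p unfolding H_def by simp
    also have "\<dots> \<le> h y" using hmin y by blast
    also have "\<dots> = H y" using heq[OF y'] unfolding H_def by simp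
    finally show "H 0 \<le> H y" .
  qed
  ultimately have "(\<Sum>k\<in>UNIV. d k * gfun \<eta> b a0 a k) = 0"
    using DERIV_local_min \<delta>p by blast
  moreover have "(\<Sum>k\<in>UNIV. d k * gfun \<eta> b a0 a k) = gfun \<eta> b a0 a i - gfun \<eta> b a0 a j"
    unfolding d_def by (simp add: left_diff_distrib sum_subtractf if_distrib[of "\<lambda>x. x * _"] sum.delta cong: if_cong)
  ultimately show ?thesis by simp
qed

theorem mainTheorem7:
  fixes N :: nat and C \<eta> :: real
    and b1 b2 a0 a1 a2 :: "'i::finite \<Rightarrow> real"
  assumes "N \<ge> 1"
    and "C = real N + 1"
    and "0 < \<eta>" and "\<eta> \<le> 1 / (270 * C)"
    and "a0 \<in> simplex" and "\<forall>i. 0 < a0 i"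
    and "is_argmin_simplex \<eta> b1 a0 a1"
    and "is_argmin_simplex \<eta> b2 a0 a2"
    and "mat_norm (inv_hess_psi \<eta> a1) (\<lambda>i. b1 i - b2 i) \<le> 12 * sqrt \<eta> * C"
  shows "\<forall>i. \<bar>a2 i - a1 i\<bar> \<le> 60 * \<eta> * C * a1 i"
proof -
  note am1 = assms(7) and am2 = assms(8)
  have eta: "\<eta> > 0" using assms(3) .
  have Cp: "C > 0" using assms(2) by simp
  have etaC: "\<eta> * C \<le> 1 / 270"
    using assms(4) Cp by (simp add: field_simps)
  define r where "r = 12 * \<eta> * C"
  have rp: "r > 0" using eta Cp r_def by simp
  have rs: "r \<le> 12 / 270" using etaC r_def by (simp add: mult.commute mult.left_commute)
  have a1p: "\<And>k. a1 k > 0" and a2p: "\<And>k. a2 k > 0"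
    using am1 am2 unfolding is_argmin_simplex_def by auto
  have s1: "(\<Sum>k\<in>UNIV. a1 k) = 1" and s2: "(\<Sum>k\<in>UNIV. a2 k) = 1"
    using am1 am2 unfolding is_argmin_simplex_def simplex_def by auto
  obtain k0 :: 'i where True by simp
  define l1 where "l1 = gfun \<eta> b1 a0 a1 k0"
  define l2 where "l2 = gfun \<eta> b2 a0 a2 k0"
  have g1: "gfun \<eta> b1 a0 a1 k = l1" for k
    unfolding l1_def by (rule stationary[OF am1 assms(6) eta])
  have g2: "gfun \<eta> b2 a0 a2 k = l2" for k
    unfolding l2_def by (rule stationary[OF am2 assms(6) eta])
  define x where "x k = \<eta> * a1 k * (b2 k - b1 k)" for k
  define m where "m = \<eta> * (l2 - l1)"
  define y where "y k = m * a1 k - x k" for k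
  have key: "a1 k / a2 k = 1 - y k" for k
  proof -
    have e1: "1 / a1 k = \<eta> * (b1 k + 1 / (\<eta> * a0 k) - l1)"
      using g1[of k] eta a1p[of k] unfolding gfun_def by (simp add: field_simps)
    have e2: "1 / a2 k = \<eta> * (b2 k + 1 / (\<eta> * a0 k) - l2)"
      using g2[of k] eta a2p[of k] unfolding gfun_def by (simp add: field_simps)
    have "a1 k / a2 k = a1 k * (1 / a2 k)" by simp
    also have "\<dots> = a1 k * (1 / a1 k + \<eta> * (b2 k - b1 k) - \<eta> * (l2 - l1))"
    proof -
      have "1 / a2 k - 1 / a1 k = \<eta> * (b2 k - b1 k) - \<eta> * (l2 - l1)"
        unfolding e1 e2 by (simp add: algebra_simps)
      then have "1 / a2 k = 1 / a1 k + \<eta> * (b2 k - b1 k) - \<eta> * (l2 - l1)" by linarith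
      then show ?thesis by (simp only:)
    qed
    also have "\<dots> = 1 - y k"
      using a1p[of k] unfolding y_def x_def m_def by (simp add: algebra_simps)
    finally show ?thesis .
  qed
  have ylt: "y k < 1" for k
    using key[of k] a1p[of k] a2p[of k] by (metis diff_gt_0_iff_gt divide_pos_pos)
  have a2eq: "a2 k = a1 k / (1 - y k)" for k
    using key[of k] a1p[of k] a2p[of k] ylt[of k] by (simp add: field_simps)
  have xsq: "(\<Sum>k\<in>UNIV. (x k)\<^sup>2) \<le> r\<^sup>2"
  proof -
    define S where "S = (\<Sum>k\<in>UNIV. \<eta> * (a1 k)\<^sup>2 * (b1 k - b2 k)\<^sup>2)"
    have Sn: "S \<ge> 0" unfolding S_def using eta by (auto intro!: sum_nonneg)
    have "mat_norm (inv_hess_psi \<eta> a1) (\<lambda>i. b1 i - b2 i) = sqrt S"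
      unfolding mat_norm_def inv_hess_psi_def S_def
      by (simp add: if_distrib[of "\<lambda>z. _ * z"] if_distrib[of "\<lambda>z. z * _"] sum.delta cong: if_cong)
        (simp add: power2_eq_square algebra_simps)
    then have "sqrt S \<le> 12 * sqrt \<eta> * C" using assms(9) by simp
    then have "(sqrt S)\<^sup>2 \<le> (12 * sqrt \<eta> * C)\<^sup>2"
      by (rule power_mono) (simp add: Sn)
    then have "S \<le> (12 * sqrt \<eta> * C)\<^sup>2" using Sn by simp
    also have "\<dots> = 144 * \<eta> * C\<^sup>2" using eta by (simp add: power_mult_distrib)
    finally have "S \<le> 144 * \<eta> * C\<^sup>2" .
    moreover have "(\<Sum>k\<in>UNIV. (x k)\<^sup>2) = \<eta> * S"
      unfolding S_def x_def by (simp add: sum_distrib_left power_mult_distrib power2_commute algebra_simps power2_eq_square)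
    ultimately have "(\<Sum>k\<in>UNIV. (x k)\<^sup>2) \<le> \<eta> * (144 * \<eta> * C\<^sup>2)"
      using eta by simp
    also have "\<dots> = r\<^sup>2" unfolding r_def by (simp add: power2_eq_square)
    finally show ?thesis .
  qed
  define M where "M = sqrt (\<Sum>k\<in>UNIV. (a1 k)\<^sup>2)"
  have sq0: "(\<Sum>k\<in>UNIV. (a1 k)\<^sup>2) > 0"
    using a1p by (intro sum_pos) (auto, metis less_irrefl)
  have Mp: "M > 0" unfolding M_def using sq0 by simp
  have M2: "M\<^sup>2 = (\<Sum>k\<in>UNIV. (a1 k)\<^sup>2)" unfolding M_def using sq0 by simp
  have a1le: "a1 k \<le> M" for k
  proof -
    have "(a1 k)\<^sup>2 \<le> (\<Sum>k\<in>UNIV. (a1 k)\<^sup>2)" by (rule member_le_sum) auto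
    then show ?thesis unfolding M_def by (rule real_le_rsqrt)
  qed
  have xabs: "\<bar>x k\<bar> \<le> r" for k
  proof -
    have "(x k)\<^sup>2 \<le> (\<Sum>k\<in>UNIV. (x k)\<^sup>2)" by (rule member_le_sum) auto
    then have "(x k)\<^sup>2 \<le> r\<^sup>2" using xsq by linarith
    then show ?thesis using rp by (metis abs_le_square_iff abs_of_pos)
  qed
  have cs: "\<bar>\<Sum>k\<in>UNIV. a1 k * x k\<bar> \<le> M * r"
  proof -
    have p1: "2 * r * M * (a1 k * x k) \<le> r\<^sup>2 * (a1 k)\<^sup>2 + M\<^sup>2 * (x k)\<^sup>2" for k
    proof -
      have "0 \<le> (a1 k * r - x k * M)\<^sup>2" by simp
      then show ?thesis by (simp add: power2_eq_square algebra_simps)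
    qed
    have p2: "- (2 * r * M * (a1 k * x k)) \<le> r\<^sup>2 * (a1 k)\<^sup>2 + M\<^sup>2 * (x k)\<^sup>2" for k
    proof -
      have "0 \<le> (a1 k * r + x k * M)\<^sup>2" by simp
      then show ?thesis by (simp add: power2_eq_square algebra_simps)
    qed
    have bnd: "r\<^sup>2 * (\<Sum>k\<in>UNIV. (a1 k)\<^sup>2) + M\<^sup>2 * (\<Sum>k\<in>UNIV. (x k)\<^sup>2) \<le> 2 * r\<^sup>2 * M\<^sup>2"
    proof -
      have "M\<^sup>2 * (\<Sum>k\<in>UNIV. (x k)\<^sup>2) \<le> M\<^sup>2 * r\<^sup>2"
        using xsq by (intro mult_left_mono) auto
      then show ?thesis unfolding M2[symmetric] by (simp add: algebra_simps)
    qed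
    have "2 * r * M * (\<Sum>k\<in>UNIV. a1 k * x k) \<le> r\<^sup>2 * (\<Sum>k\<in>UNIV. (a1 k)\<^sup>2) + M\<^sup>2 * (\<Sum>k\<in>UNIV. (x k)\<^sup>2)"
      unfolding sum_distrib_left sum.distrib[symmetric] by (rule sum_mono) (rule p1)
    moreover have "- (2 * r * M * (\<Sum>k\<in>UNIV. a1 k * x k)) \<le> r\<^sup>2 * (\<Sum>k\<in>UNIV. (a1 k)\<^sup>2) + M\<^sup>2 * (\<Sum>k\<in>UNIV. (x k)\<^sup>2)"
      unfolding sum_distrib_left sum.distrib[symmetric] sum_negf[symmetric] by (rule sum_mono) (rule p2)
    ultimately have "2 * r * M * \<bar>\<Sum>k\<in>UNIV. a1 k * x k\<bar> \<le> 2 * r * M * (M * r)"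
      using bnd by (simp add: abs_if power2_eq_square algebra_simps)
    then show ?thesis using rp Mp by (simp add: mult_le_cancel_left)
  qed
  have sy: "(\<Sum>k\<in>UNIV. a1 k * y k) = m * M\<^sup>2 - (\<Sum>k\<in>UNIV. a1 k * x k)"
    unfolding y_def M2 by (simp add: right_diff_distrib sum_subtractf sum_distrib_left power2_eq_square algebra_simps)
  have frac: "a1 k / (1 - y k) = a1 k + a1 k * y k / (1 - y k)" for k
    using ylt[of k] by (simp add: field_simps)
  have s0: "(\<Sum>k\<in>UNIV. a1 k * y k / (1 - y k)) = 0"
  proof -
    have "(\<Sum>k\<in>UNIV. a2 k) = (\<Sum>k\<in>UNIV. a1 k) + (\<Sum>k\<in>UNIV. a1 k * y k / (1 - y k))"
      unfolding a2eq frac by (simp add: sum.distrib)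
    then show ?thesis using s1 s2 by simp
  qed
  have up: "m * M \<le> r"
  proof -
    have "a1 k * y k \<le> a1 k * y k / (1 - y k)" for k
    proof -
      have "a1 k * y k / (1 - y k) - a1 k * y k = a1 k * (y k)\<^sup>2 / (1 - y k)"
        using ylt[of k] by (simp add: field_simps power2_eq_square)
      also have "\<dots> \<ge> 0" using ylt[of k] a1p[of k] by simp
      finally show ?thesis by simp
    qed
    then have "(\<Sum>k\<in>UNIV. a1 k * y k) \<le> 0" using s0 sum_mono by (metis (no_types, lifting))
    then have "m * M\<^sup>2 \<le> M * r" using sy cs by linarith
    then have "M * (m * M) \<le> M * r" by (simp add: power2_eq_square algebra_simps)
    then show ?thesis using Mp by simp
  qed
  have lo: "- 2 * r \<le> m * M"
  proof (rule ccontr)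
    assume "\<not> - 2 * r \<le> m * M"
    then have mlt: "m * M < - 2 * r" by simp
    define z where "z k = - 2 * r * a1 k / M - x k" for k
    have yz: "y k < z k" for k
    proof -
      have "m < - 2 * r / M" using mlt Mp by (simp add: field_simps)
      then have "m * a1 k < (- 2 * r / M) * a1 k" using a1p[of k] by (rule mult_strict_right_mono)
      moreover have "(- 2 * r / M) * a1 k = - 2 * r * a1 k / M" by simp
      ultimately show ?thesis unfolding y_def z_def by linarith
    qed
    have zr: "z k \<le> r" for k
    proof -
      have "- 2 * r * a1 k / M \<le> 0" using rp Mp a1p[of k] by (simp add: divide_nonpos_pos mult_nonneg_nonneg)
      then show ?thesis unfolding z_def using xabs[of k] by linarith
    qed
    have r1: "r < 1" using rs by simp
    have lt: "a2 k < a1 k / (1 - z k)" for k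
    proof -
      have "0 < 1 - z k" using zr[of k] r1 by linarith
      moreover have "1 - z k < 1 - y k" using yz[of k] by simp
      ultimately show ?thesis unfolding a2eq using a1p[of k] by (simp add: divide_strict_left_mono)
    qed
    have "(\<Sum>k\<in>UNIV. a2 k) < (\<Sum>k\<in>UNIV. a1 k / (1 - z k))"
      by (rule sum_strict_mono) (auto intro: lt)
    also have "\<dots> \<le> (\<Sum>k\<in>UNIV. a1 k + a1 k * z k + a1 k * (z k)\<^sup>2 / (1 - r))"
    proof (rule sum_mono)
      fix k :: 'i
      have zp: "0 < 1 - z k" "1 - r \<le> 1 - z k" "0 < 1 - r" using zr[of k] r1 by linarith+
      have "a1 k / (1 - z k) = a1 k + a1 k * z k + a1 k * (z k)\<^sup>2 / (1 - z k)"
        using zp by (simp add: field_simps power2_eq_square)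
      also have "a1 k * (z k)\<^sup>2 / (1 - z k) \<le> a1 k * (z k)\<^sup>2 / (1 - r)"
        using zp a1p[of k] by (intro divide_left_mono) auto
      finally show "a1 k / (1 - z k) \<le> a1 k + a1 k * z k + a1 k * (z k)\<^sup>2 / (1 - r)" by simp
    qed
    also have "\<dots> = 1 + (\<Sum>k\<in>UNIV. a1 k * z k) + (\<Sum>k\<in>UNIV. a1 k * (z k)\<^sup>2) / (1 - r)"
      using s1 by (simp add: sum.distrib sum_divide_distrib)
    also have "\<dots> \<le> 1 + (- r * M) + (10 * M * r\<^sup>2) / (1 - r)"
    proof -
      have "(\<Sum>k\<in>UNIV. a1 k * z k) = - 2 * r / M * (\<Sum>k\<in>UNIV. (a1 k)\<^sup>2) - (\<Sum>k\<in>UNIV. a1 k * x k)"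
        unfolding z_def by (simp add: right_diff_distrib sum_subtractf sum_distrib_left power2_eq_square algebra_simps)
      also have "\<dots> = - 2 * r * M - (\<Sum>k\<in>UNIV. a1 k * x k)"
        using Mp unfolding M2[symmetric] by (simp add: power2_eq_square)
      finally have e1: "(\<Sum>k\<in>UNIV. a1 k * z k) \<le> - r * M" using cs by (simp add: abs_le_iff algebra_simps)
      have pz: "a1 k * (z k)\<^sup>2 \<le> 8 * r\<^sup>2 / M * (a1 k)\<^sup>2 + 2 * M * (x k)\<^sup>2" for k
      proof -
        have "(z k)\<^sup>2 \<le> 2 * (2 * r * a1 k / M)\<^sup>2 + 2 * (x k)\<^sup>2"
        proof -
          have g: "(- u - v)\<^sup>2 \<le> 2 * u\<^sup>2 + 2 * v\<^sup>2" for u v :: real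
          proof -
            have "0 \<le> (u - v)\<^sup>2" by simp
            then show ?thesis by (simp add: power2_eq_square algebra_simps)
          qed
          have "z k = - (2 * r * a1 k / M) - x k" unfolding z_def by simp
          then show ?thesis using g[of "2 * r * a1 k / M" "x k"] by simp
        qed
        then have "a1 k * (z k)\<^sup>2 \<le> a1 k * (2 * (2 * r * a1 k / M)\<^sup>2 + 2 * (x k)\<^sup>2)"
          using a1p[of k] by (simp add: mult_left_mono)
        also have "\<dots> = 8 * r\<^sup>2 / M\<^sup>2 * (a1 k * (a1 k)\<^sup>2) + 2 * a1 k * (x k)\<^sup>2"
          by (simp add: power2_eq_square field_simps)
        also have "\<dots> \<le> 8 * r\<^sup>2 / M\<^sup>2 * (M * (a1 k)\<^sup>2) + 2 * M * (x k)\<^sup>2"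
        proof (rule add_mono)
          show "8 * r\<^sup>2 / M\<^sup>2 * (a1 k * (a1 k)\<^sup>2) \<le> 8 * r\<^sup>2 / M\<^sup>2 * (M * (a1 k)\<^sup>2)"
            using a1le[of k] by (intro mult_left_mono mult_right_mono) auto
          show "2 * a1 k * (x k)\<^sup>2 \<le> 2 * M * (x k)\<^sup>2"
            using a1le[of k] by (intro mult_right_mono) auto
        qed
        also have "\<dots> = 8 * r\<^sup>2 / M * (a1 k)\<^sup>2 + 2 * M * (x k)\<^sup>2"
          using Mp by (simp add: power2_eq_square)
        finally show ?thesis .
      qed
      have "(\<Sum>k\<in>UNIV. a1 k * (z k)\<^sup>2) \<le> (\<Sum>k\<in>UNIV. 8 * r\<^sup>2 / M * (a1 k)\<^sup>2 + 2 * M * (x k)\<^sup>2)"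
        by (rule sum_mono) (rule pz)
      also have "\<dots> = 8 * r\<^sup>2 / M * M\<^sup>2 + 2 * M * (\<Sum>k\<in>UNIV. (x k)\<^sup>2)"
        unfolding M2 by (simp add: sum.distrib sum_distrib_left)
      also have "\<dots> \<le> 8 * r\<^sup>2 / M * M\<^sup>2 + 2 * M * r\<^sup>2"
        using xsq Mp by simp
      also have "\<dots> = 10 * M * r\<^sup>2" using Mp by (simp add: power2_eq_square)
      finally have e2: "(\<Sum>k\<in>UNIV. a1 k * (z k)\<^sup>2) \<le> 10 * M * r\<^sup>2" .
      have "(\<Sum>k\<in>UNIV. a1 k * (z k)\<^sup>2) / (1 - r) \<le> (10 * M * r\<^sup>2) / (1 - r)"
        using e2 r1 by (simp add: divide_right_mono)
      then show ?thesis using e1 by linarith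
    qed
    also have "\<dots> \<le> 1"
    proof -
      have "10 * M * r\<^sup>2 \<le> r * M * (1 - r)"
      proof -
        have "10 * r \<le> 1 - r" using rs by simp
        then have "(r * M) * (10 * r) \<le> (r * M) * (1 - r)" using rp Mp by (intro mult_left_mono) auto
        then show ?thesis by (simp add: power2_eq_square algebra_simps)
      qed
      then have "(10 * M * r\<^sup>2) / (1 - r) \<le> r * M" using r1 by (simp add: divide_le_eq mult.commute)
      then show ?thesis by simp
    qed
    finally show False using s2 by simp
  qed
  have mM: "\<bar>m\<bar> * M \<le> 2 * r" using up lo rp by (cases "m \<ge> 0") (auto simp: abs_if)
  have yabs: "\<bar>y k\<bar> \<le> 3 * r" for k
  proof -
    have "\<bar>m * a1 k\<bar> \<le> \<bar>m\<bar> * M" using a1le[of k] a1p[of k] by (simp add: abs_mult mult_left_mono)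
    then have "\<bar>m * a1 k\<bar> \<le> 2 * r" using mM by linarith
    then show ?thesis unfolding y_def using xabs[of k] by linarith
  qed
  show ?thesis
  proof
    fix k :: 'i
    have r3: "3 * r < 1" using rs by simp
    have den: "1 - 3 * r \<le> 1 - y k" "0 < 1 - 3 * r" using yabs[of k] r3 by (auto simp: abs_le_iff)
    have "a2 k - a1 k = a1 k * y k / (1 - y k)" unfolding a2eq using frac[of k] by simp
    then have "\<bar>a2 k - a1 k\<bar> = a1 k * \<bar>y k\<bar> / (1 - y k)" using a1p[of k] den by (simp add: abs_mult)
    also have "\<dots> \<le> a1 k * (3 * r) / (1 - 3 * r)"
      using den a1p[of k] yabs[of k] by (intro frac_le mult_left_mono) auto
    also have "\<dots> \<le> a1 k * (5 * r)"
    proof -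
      have "3 * r \<le> (5 * r) * (1 - 3 * r)" using rs rp by (simp add: algebra_simps)
      then have "3 * r / (1 - 3 * r) \<le> 5 * r" using den by (simp add: divide_le_eq)
      then have "a1 k * (3 * r / (1 - 3 * r)) \<le> a1 k * (5 * r)"
        using a1p[of k] by (intro mult_left_mono) auto
      then show ?thesis by simp
    qed
    also have "\<dots> = 60 * \<eta> * C * a1 k" unfolding r_def by simp
    finally show "\<bar>a2 k - a1 k\<bar> \<le> 60 * \<eta> * C * a1 k" .
  qed
qed

end
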